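(* Let $\mu>0$ and $x_m\ge 0$. Let $g:[0,+\infty)\to(0,+\infty)$ be continuous and strictly decreasing with $g(+\infty)=0$, and let $\beta:[x_m,+\infty)\to[0,+\infty)$ be globally Lipschitz with $\beta(x)>0$ for almost every $x\in[x_0,+\infty)$, for some $x_0\ge x_m$ ($\beta$ is not assumed to be monotone). For $b\ge 0$ define $$R(b):=\int_0^\infty \beta\left( x_m + \int_0^a g\left( \frac{e^{-\mu\tau}}{\mu}b\right) d\tau \right) e^{-\mu a}\,da, \qquad F(b):=bR(b).$$ Then $F$ is strictly increasing on $[0,+\infty)$.
   Context: $F(b)$ coincides with the value of the functional $\phi\mapsto\int_0^\infty \beta\left( x_m + \int_0^a g\left( e^{-\mu(\tau -a)} \int_a^\infty e^{-\mu s} \phi(-s)\,ds \right) d\tau \right) e^{-\mu a} \phi(-a)\,da$ evaluated at the constant function $\phi\equiv b$; this functional defines the renewal equation $b(t)=\int_0^\infty \beta\left( x_m + \int_0^a g\left( e^{-\mu(\tau -a)} \int_a^\infty e^{-\mu s} b(t-s)\,ds \right) d\tau \right) e^{-\mu a} b(t-a)\,da$ modelling tree population birth rate, with $g$ the growth rate, $\beta$ the per capita reproduction rate, $\mu$ the death rate. *)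

theory Defs
  imports "HOL-Analysis.Analysis"
begin

definition R_fun :: "real \<Rightarrow> real \<Rightarrow> (real \<Rightarrow> real) \<Rightarrow> (real \<Rightarrow> real) \<Rightarrow> real \<Rightarrow> real" where
  "R_fun \<mu> x\<^sub>m g \<beta> b =
     (\<integral>a\<in>{0..}. \<beta> (x\<^sub>m + (\<integral>\<tau>\<in>{0..a}. g (exp (- \<mu> * \<tau>) / \<mu> * b) \<partial>lborel))
                   * exp (- \<mu> * a) \<partial>lborel)"

definition F_fun :: "real \<Rightarrow> real \<Rightarrow> (real \<Rightarrow> real) \<Rightarrow> (real \<Rightarrow> real) \<Rightarrow> real \<Rightarrow> real" where
  "F_fun \<mu> x\<^sub>m g \<beta> b = b * R_fun \<mu> x\<^sub>m g \<beta> b"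

end

theory Submission
  imports Defs "HOL-Probability.Sinc_Integral"
begin

locale setting =
  fixes \<mu> xm :: real and g \<beta> :: "real \<Rightarrow> real"
  assumes mu_pos: "\<mu> > 0"
    and xm_nonneg: "xm \<ge> 0"
    and g_cont: "continuous_on {0..} g"
    and g_pos: "\<And>x. x \<ge> 0 \<Longrightarrow> g x > 0"
    and g_strict_decr: "\<And>x y. 0 \<le> x \<Longrightarrow> x < y \<Longrightarrow> g y < g x"
    and beta_lip: "\<exists>L. L-lipschitz_on {xm..} \<beta>"
    and beta_nonneg: "\<And>x. x \<ge> xm \<Longrightarrow> \<beta> x \<ge> 0"
    and beta_pos_ae: "\<exists>x\<^sub>0 \<ge> xm. AE x in lborel. x \<ge> x\<^sub>0 \<longrightarrow> \<beta> x > 0"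
begin

definition phi :: "real \<Rightarrow> real \<Rightarrow> real" where
  "phi b \<tau> = g (exp (- \<mu> * \<tau>) / \<mu> * b)"

definition Z :: "real \<Rightarrow> real \<Rightarrow> real" where
  "Z b a = integral {0..a} (phi b)"

lemma g_mono: "0 \<le> x \<Longrightarrow> x \<le> y \<Longrightarrow> g y \<le> g x"
  using g_strict_decr[of x y] by (cases "x = y") auto

lemma g_isCont: "x > 0 \<Longrightarrow> isCont g x"
  using continuous_on_interior[OF g_cont, of x] by simp

lemma phi_isCont: "b > 0 \<Longrightarrow> isCont (phi b) t"
  unfolding phi_def using mu_pos
  by (intro continuous_at_compose[OF _ g_isCont, unfolded o_def])
     (auto intro!: continuous_intros)

lemma phi_cont: "b > 0 \<Longrightarrow> continuous_on S (phi b)"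
  by (simp add: continuous_at_imp_continuous_on phi_isCont)

lemma phi_pos: "b \<ge> 0 \<Longrightarrow> phi b t > 0"
  unfolding phi_def using mu_pos by (intro g_pos) auto

lemma phi_lower: "b \<ge> 0 \<Longrightarrow> t \<ge> 0 \<Longrightarrow> g (b / \<mu>) \<le> phi b t"
  unfolding phi_def using mu_pos
  by (intro g_mono) (auto simp: field_simps intro!: mult_left_le)

lemma phi_upper: "b \<ge> 0 \<Longrightarrow> t \<ge> 0 \<Longrightarrow> phi b t \<le> g 0"
  unfolding phi_def using mu_pos
  by (intro g_mono) auto

lemma Z_lebesgue: "b > 0 \<Longrightarrow> (\<integral>\<tau>\<in>{0..a}. g (exp (- \<mu> * \<tau>) / \<mu> * b) \<partial>lborel) = Z b a"
  unfolding Z_def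
  using set_borel_integral_eq_integral(2)[OF borel_integrable_atLeastAtMost'[OF phi_cont, of b 0 a]]
  by (simp add: phi_def)

lemma phi_integrable: "b > 0 \<Longrightarrow> phi b integrable_on {x..y}"
  by (intro integrable_continuous_real phi_cont)

lemma Z_lower: "b > 0 \<Longrightarrow> a \<ge> 0 \<Longrightarrow> a * g (b / \<mu>) \<le> Z b a"
  unfolding Z_def
  using integral_le[of "\<lambda>_. g (b / \<mu>)" "{0..a}" "phi b"] phi_integrable[of b 0 a] phi_lower[of b]
  by auto

lemma Z_upper: "b > 0 \<Longrightarrow> a \<ge> 0 \<Longrightarrow> Z b a \<le> a * g 0"
  unfolding Z_def
  using integral_le[of "phi b" "{0..a}" "\<lambda>_. g 0"] phi_integrable[of b 0 a] phi_upper[of b]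
  by auto

lemma Z_diff: "b > 0 \<Longrightarrow> 0 \<le> x \<Longrightarrow> x \<le> y \<Longrightarrow> Z b y = Z b x + integral {x..y} (phi b)"
  unfolding Z_def using Henstock_Kurzweil_Integration.integral_combine[OF _ _ phi_integrable, of 0 x y b] by simp

lemma Z_strict: "b > 0 \<Longrightarrow> 0 \<le> x \<Longrightarrow> x < y \<Longrightarrow> Z b x < Z b y"
proof -
  assume h: "b > 0" "0 \<le> x" "x < y"
  have "(y - x) * g (b / \<mu>) \<le> integral {x..y} (phi b)"
    using integral_le[of "\<lambda>_. g (b / \<mu>)" "{x..y}" "phi b"] phi_integrable[of b x y] phi_lower[of b] h
    by auto
  moreover have "g (b / \<mu>) > 0" using h mu_pos by (intro g_pos) auto
  ultimately show ?thesis using Z_diff[of b x y] h by (smt (verit) mult_pos_pos)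
qed

lemma Z_deriv: "b > 0 \<Longrightarrow> a > 0 \<Longrightarrow> (Z b has_real_derivative phi b a) (at a)"
proof -
  assume h: "b > 0" "a > 0"
  have "((\<lambda>x. integral {0..x} (phi b)) has_real_derivative phi b a) (at a within {0..a+1})"
    using h by (intro integral_has_real_derivative phi_cont) auto
  moreover have "at a within {0..a+1} = at a" using h by (intro at_within_interior) auto
  ultimately show ?thesis unfolding Z_def by simp
qed

lemma Z_0: "Z b 0 = 0" by (simp add: Z_def)

lemma Z_nonneg: "b > 0 \<Longrightarrow> a \<ge> 0 \<Longrightarrow> Z b a \<ge> 0"
  using Z_lower[of b a] g_pos[of "b/\<mu>"] mu_pos by (smt (verit) divide_nonneg_pos mult_nonneg_nonneg)

lemma Z_pos: "b > 0 \<Longrightarrow> a > 0 \<Longrightarrow> Z b a > 0"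
  using Z_strict[of b 0 a] Z_0 by simp

lemma Z_isCont: "b > 0 \<Longrightarrow> a > 0 \<Longrightarrow> isCont (Z b) a"
  using Z_deriv DERIV_isCont by blast

lemma Z_inj: "b > 0 \<Longrightarrow> inj_on (Z b) {0..}"
  by (intro strict_mono_on_imp_inj_on) (auto simp: strict_mono_on_def Z_strict)

definition Ainv :: "real \<Rightarrow> real \<Rightarrow> real" where
  "Ainv b = inv_into {0..} (Z b)"

lemma Ainv_Z: "b > 0 \<Longrightarrow> a \<ge> 0 \<Longrightarrow> Ainv b (Z b a) = a"
  unfolding Ainv_def using Z_inj by (simp add: inv_into_f_f)

lemma Z_surj: "b > 0 \<Longrightarrow> z > 0 \<Longrightarrow> \<exists>a>0. Z b a = z"
proof -
  assume b: "b > 0" and z: "z > 0"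
  define c where "c = g (b / \<mu>)"
  have c: "c > 0" unfolding c_def using b mu_pos by (intro g_pos) auto
  have g0: "g 0 > 0" using g_pos by auto
  define d where "d = z / (2 * g 0)"
  have d: "d > 0" unfolding d_def using z g0 by auto
  define T where "T = max d (z / c)"
  have "Z b d \<le> d * g 0" using Z_upper[of b d] b d by auto
  also have "\<dots> = z / 2" unfolding d_def using g0 by auto
  finally have zd: "Z b d \<le> z" using z by auto
  have "z \<le> T * c"
  proof -
    have "z = (z / c) * c" using c by simp
    also have "\<dots> \<le> T * c" unfolding T_def using c by (intro mult_right_mono) auto
    finally show ?thesis .
  qed
  also have "\<dots> \<le> Z b T" using Z_lower[of b T] b d unfolding T_def c_def by (auto simp: mult.commute)
  finally have zT: "z \<le> Z b T" .
  have "continuous_on {d..T} (Z b)"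
    using b d by (intro continuous_at_imp_continuous_on ballI Z_isCont) auto
  then obtain a where "d \<le> a" "a \<le> T" "Z b a = z"
    using IVT'[of "Z b" d z T] zd zT unfolding T_def by auto
  then show ?thesis using d by (intro exI[of _ a]) auto
qed

lemma Z_Ainv: "b > 0 \<Longrightarrow> z > 0 \<Longrightarrow> Z b (Ainv b z) = z \<and> Ainv b z > 0"
proof -
  assume b: "b > 0" and z: "z > 0"
  obtain a where a: "a > 0" "Z b a = z" using Z_surj[OF b z] by auto
  then show ?thesis using Ainv_Z[of b a] b by auto
qed

lemma Ainv_isCont: "b > 0 \<Longrightarrow> a > 0 \<Longrightarrow> isCont (Ainv b) (Z b a)"
proof -
  assume b: "b > 0" and a: "a > 0"
  show ?thesis
  proof (rule isCont_inverse_function[where d = "a/2" and f = "Z b" and g = "Ainv b" and x = a])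
    show "0 < a / 2" using a by simp
  next
    fix z assume "\<bar>z - a\<bar> \<le> a / 2"
    moreover have "a - z \<le> \<bar>z - a\<bar>" by linarith
    ultimately have z: "z > 0" using a by linarith
    show "Ainv b (Z b z) = z" using Ainv_Z[OF b] z by simp
  next
    fix z assume "\<bar>z - a\<bar> \<le> a / 2"
    moreover have "a - z \<le> \<bar>z - a\<bar>" by linarith
    ultimately have z: "z > 0" using a by linarith
    show "isCont (Z b) z" using Z_isCont[OF b z] .
  qed
qed

definition w :: "real \<Rightarrow> real \<Rightarrow> real" where
  "w b z = b * exp (- \<mu> * Ainv b z) / phi b (Ainv b z)"

lemma w_Z: "b > 0 \<Longrightarrow> a \<ge> 0 \<Longrightarrow> w b (Z b a) = b * exp (- \<mu> * a) / phi b a"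
  unfolding w_def by (simp add: Ainv_Z)

lemma w_isCont: "b > 0 \<Longrightarrow> a > 0 \<Longrightarrow> isCont (w b) (Z b a)"
proof -
  assume b: "b > 0" and a: "a > 0"
  have c: "isCont (Ainv b) (Z b a)" using Ainv_isCont[OF b a] .
  have p: "isCont (phi b) (Ainv b (Z b a))" using phi_isCont[OF b] .
  have "isCont (\<lambda>z. phi b (Ainv b z)) (Z b a)"
    using continuous_at_compose[OF c p] by (simp add: o_def)
  moreover have "isCont (\<lambda>z. b * exp (- \<mu> * Ainv b z)) (Z b a)"
    using c by (intro continuous_intros)
  moreover have "phi b (Ainv b (Z b a)) \<noteq> 0" using phi_pos[of b "Ainv b (Z b a)"] b by simp
  ultimately show ?thesis unfolding w_def
    by (intro isCont_divide) auto
qed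

lemma w_pos: "b > 0 \<Longrightarrow> w b z > 0"
  unfolding w_def using phi_pos[of b] by auto

definition Lb :: real where "Lb = (SOME L. L-lipschitz_on {xm..} \<beta>)"

lemma Lb: "Lb-lipschitz_on {xm..} \<beta>"
  unfolding Lb_def using beta_lip by (rule someI_ex)

lemma Lb_nonneg: "Lb \<ge> 0" using lipschitz_on_nonneg[OF Lb] .

lemma beta_bound: "y \<ge> xm \<Longrightarrow> \<bar>\<beta> y\<bar> \<le> \<bar>\<beta> xm\<bar> + Lb * (y - xm)"
proof -
  assume y: "y \<ge> xm"
  have "dist (\<beta> y) (\<beta> xm) \<le> Lb * dist y xm" using lipschitz_onD[OF Lb, of y xm] y by auto
  then show ?thesis using y by (auto simp: dist_real_def)
qed

lemma beta_isCont: "y > xm \<Longrightarrow> isCont \<beta> y"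
  using continuous_on_interior[OF lipschitz_on_continuous_on[OF Lb], of y] by simp

definition h :: "real \<Rightarrow> real \<Rightarrow> real" where
  "h b x = \<beta> (xm + Z b x) * exp (- \<mu> * x)"

lemma h_isCont: "b > 0 \<Longrightarrow> x > 0 \<Longrightarrow> isCont (h b) x"
proof -
  assume b: "b > 0" and x: "x > 0"
  have "isCont (\<lambda>x. xm + Z b x) x" using Z_isCont[OF b x] by (intro continuous_intros)
  moreover have "isCont \<beta> (xm + Z b x)" using Z_pos[OF b x] by (intro beta_isCont) auto
  ultimately have "isCont (\<lambda>x. \<beta> (xm + Z b x)) x" using continuous_at_compose by (force simp: o_def)
  then show ?thesis unfolding h_def by (intro continuous_intros)
qed

lemma x_exp_bound: "x \<ge> 0 \<Longrightarrow> x * exp (- \<mu> * x) \<le> (2 / \<mu>) * exp (- (x * (\<mu> / 2)))"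
proof -
  assume x: "x \<ge> 0"
  have "\<mu> * x / 2 \<le> exp (\<mu> * x / 2)" using exp_ge_add_one_self[of "\<mu> * x / 2"] by linarith
  then have "x \<le> (2 / \<mu>) * exp (\<mu> * x / 2)" using mu_pos by (simp add: field_simps)
  then have "x * exp (- \<mu> * x) \<le> (2 / \<mu>) * exp (\<mu> * x / 2) * exp (- \<mu> * x)"
    by (intro mult_right_mono) auto
  also have "\<dots> = (2 / \<mu>) * exp (- (x * (\<mu> / 2)))"
    by (simp add: mult.assoc exp_add[symmetric] algebra_simps)
  finally show ?thesis .
qed

lemma h_bound: "b > 0 \<Longrightarrow> x \<ge> 0 \<Longrightarrow>
   \<bar>h b x\<bar> \<le> (\<bar>\<beta> xm\<bar> + Lb * g 0 * (2 / \<mu>)) * exp (- (x * (\<mu> / 2)))"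
proof -
  assume b: "b > 0" and x: "x \<ge> 0"
  have e1: "exp (- \<mu> * x) \<le> exp (- (x * (\<mu> / 2)))" using mu_pos x by (simp add: mult_left_mono)
  have "\<bar>h b x\<bar> = \<bar>\<beta> (xm + Z b x)\<bar> * exp (- \<mu> * x)" unfolding h_def by (simp add: abs_mult)
  also have "\<dots> \<le> (\<bar>\<beta> xm\<bar> + Lb * (x * g 0)) * exp (- \<mu> * x)"
  proof (rule mult_right_mono)
    have "Lb * Z b x \<le> Lb * (x * g 0)" using Z_upper[OF b x] Lb_nonneg by (rule mult_left_mono)
    then show "\<bar>\<beta> (xm + Z b x)\<bar> \<le> \<bar>\<beta> xm\<bar> + Lb * (x * g 0)"
      using beta_bound[of "xm + Z b x"] Z_nonneg[OF b x] by auto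
  qed simp
  also have "\<dots> = \<bar>\<beta> xm\<bar> * exp (- \<mu> * x) + Lb * g 0 * (x * exp (- \<mu> * x))"
    by (simp add: algebra_simps)
  also have "\<dots> \<le> \<bar>\<beta> xm\<bar> * exp (- (x * (\<mu> / 2))) + Lb * g 0 * ((2 / \<mu>) * exp (- (x * (\<mu> / 2))))"
  proof (rule add_mono)
    show "\<bar>\<beta> xm\<bar> * exp (- \<mu> * x) \<le> \<bar>\<beta> xm\<bar> * exp (- (x * (\<mu> / 2)))"
      using e1 by (rule mult_left_mono) simp
    have "0 \<le> Lb * g 0" using Lb_nonneg g_pos[of 0] by simp
    then show "Lb * g 0 * (x * exp (- \<mu> * x)) \<le> Lb * g 0 * ((2 / \<mu>) * exp (- (x * (\<mu> / 2))))"
      using x_exp_bound[OF x] by (intro mult_left_mono)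
  qed
  also have "\<dots> = (\<bar>\<beta> xm\<bar> + Lb * g 0 * (2 / \<mu>)) * exp (- (x * (\<mu> / 2)))"
    by (simp add: algebra_simps)
  finally show ?thesis .
qed

lemma h_integrable: "b > 0 \<Longrightarrow> set_integrable lborel {0<..} (h b)"
proof -
  assume b: "b > 0"
  let ?K = "\<bar>\<beta> xm\<bar> + Lb * g 0 * (2 / \<mu>)"
  have "set_integrable lborel {0<..} (\<lambda>x. ?K * exp (- (x * (\<mu> / 2))))"
    using integrable_I0i_exp_mscale[of "\<mu>/2"] mu_pos by (intro set_integrable_mult_right) auto
  moreover have "set_borel_measurable borel {0<..} (h b)"
    using b by (intro set_measurable_continuous_on continuous_at_imp_continuous_on ballI h_isCont) auto
  then have "set_borel_measurable lborel {0<..} (h b)" by (simp add: set_borel_measurable_def)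
  moreover have "AE x in lborel. x \<in> {0<..} \<longrightarrow> norm (h b x) \<le> norm (?K * exp (- (x * (\<mu> / 2))))"
  proof (rule AE_I2, rule impI)
    fix x :: real assume "x \<in> {0<..}"
    then have "\<bar>h b x\<bar> \<le> ?K * exp (- (x * (\<mu> / 2)))" using h_bound[OF b, of x] by simp
    also have "\<dots> \<le> \<bar>?K * exp (- (x * (\<mu> / 2)))\<bar>" by (rule abs_ge_self)
    finally show "norm (h b x) \<le> norm (?K * exp (- (x * (\<mu> / 2))))" by simp
  qed
  ultimately show ?thesis
    by (rule set_integrable_bound)
qed

lemma Z_lim0: "b > 0 \<Longrightarrow> (Z b \<longlongrightarrow> 0) (at_right 0)"
proof -
  assume b: "b > 0"
  have lim: "((\<lambda>x. x * g 0) \<longlongrightarrow> 0) (at_right 0)"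
    by (rule tendsto_eq_intros | simp)+ 
  have ev1: "eventually (\<lambda>x. 0 \<le> Z b x) (at_right 0)"
    using eventually_at_right_less[of 0] by (rule eventually_mono) (rule Z_nonneg[OF b], simp)
  have ev2: "eventually (\<lambda>x. Z b x \<le> x * g 0) (at_right 0)"
    using eventually_at_right_less[of 0] by (rule eventually_mono) (rule Z_upper[OF b], simp)
  show ?thesis
    by (rule real_tendsto_sandwich[OF ev1 ev2 tendsto_const lim])
qed

lemma Z_lim_top: "b > 0 \<Longrightarrow> filterlim (Z b) at_top at_top"
proof -
  assume b: "b > 0"
  have c: "g (b / \<mu>) > 0" using b mu_pos by (intro g_pos) auto
  have "filterlim (\<lambda>x. x * g (b / \<mu>)) at_top at_top"
    using c by (intro filterlim_at_top_mult_tendsto_pos[OF tendsto_const] filterlim_ident) auto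
  moreover have "eventually (\<lambda>x. x * g (b / \<mu>) \<le> Z b x) at_top"
    using eventually_ge_at_top[of 0] by (rule eventually_mono) (rule Z_lower[OF b])
  ultimately show ?thesis by (rule filterlim_at_top_mono)
qed

lemma subst_lemma:
  assumes b: "b > 0"
  shows "set_integrable lborel (einterval 0 \<infinity>) (\<lambda>z. \<beta> (xm + z) * w b z)"
    "(LBINT z=0..\<infinity>. \<beta> (xm + z) * w b z) = (LBINT x=0..\<infinity>. \<beta> (xm + Z b x) * w b (Z b x) * phi b x)"
proof -
  have eq: "\<beta> (xm + Z b x) * w b (Z b x) * phi b x = b * h b x" if "x > 0" for x
  proof -
    have p: "phi b x \<noteq> 0" using b phi_pos[of b x] by simp
    have "w b (Z b x) = b * exp (- \<mu> * x) / phi b x" using w_Z[OF b, of x] that by simp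
    then show ?thesis unfolding h_def using p by simp
  qed
  have int: "set_integrable lborel (einterval 0 \<infinity>) (\<lambda>x. \<beta> (xm + Z b x) * w b (Z b x) * phi b x)"
  proof -
    have "set_integrable lborel {0<..} (\<lambda>x. b * h b x)" using h_integrable[OF b] by auto
    moreover have "einterval 0 \<infinity> = {0<..}" unfolding einterval_iff set_eq_iff by (simp add: zero_ereal_def)
    moreover have "set_integrable lborel {0<..} (\<lambda>x. b * h b x) =
      set_integrable lborel {0<..} (\<lambda>x. \<beta> (xm + Z b x) * w b (Z b x) * phi b x)"
      by (rule set_integrable_cong) (simp_all add: eq)
    ultimately show ?thesis by simp
  qed
  note S = interval_integral_substitution_nonneg[of 0 \<infinity> "Z b" "phi b" "\<lambda>z. \<beta> (xm + z) * w b z" 0 \<infinity>]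
  have contf: "isCont (\<lambda>z. \<beta> (xm + z) * w b z) (Z b x)" if x: "x > 0" for x
  proof -
    have "isCont \<beta> (xm + Z b x)" using Z_pos[OF b x] by (intro beta_isCont) auto
    moreover have "isCont (\<lambda>z. xm + z) (Z b x)" by (intro continuous_intros)
    ultimately have "isCont (\<beta> \<circ> (\<lambda>z. xm + z)) (Z b x)"
      using continuous_at_compose[of "Z b x" "\<lambda>z. xm + z" \<beta>] by simp
    then have "isCont (\<lambda>z. \<beta> (xm + z)) (Z b x)" by (simp add: o_def)
    then show ?thesis using w_isCont[OF b x] by (rule isCont_mult)
  qed
  have prem: "0 < (\<infinity>::ereal)"
     "\<And>x. 0 < ereal x \<Longrightarrow> ereal x < \<infinity> \<Longrightarrow> DERIV (Z b) x :> phi b x"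
     "\<And>x. 0 < ereal x \<Longrightarrow> ereal x < \<infinity> \<Longrightarrow> isCont (\<lambda>z. \<beta> (xm + z) * w b z) (Z b x)"
     "\<And>x. 0 < ereal x \<Longrightarrow> ereal x < \<infinity> \<Longrightarrow> isCont (phi b) x"
     "\<And>x. 0 < ereal x \<Longrightarrow> ereal x < \<infinity> \<Longrightarrow> 0 \<le> \<beta> (xm + Z b x) * w b (Z b x)"
     "\<And>x. 0 \<le> ereal x \<Longrightarrow> ereal x \<le> \<infinity> \<Longrightarrow> 0 \<le> phi b x"
     "((ereal \<circ> Z b \<circ> real_of_ereal) \<longlongrightarrow> 0) (at_right 0)"
     "((ereal \<circ> Z b \<circ> real_of_ereal) \<longlongrightarrow> \<infinity>) (at_left \<infinity>)"
  proof -
    show "0 < (\<infinity>::ereal)" by simp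
    show "DERIV (Z b) x :> phi b x" if "0 < ereal x" for x
      using that Z_deriv[OF b] by (simp add: zero_ereal_def)
    show "isCont (\<lambda>z. \<beta> (xm + z) * w b z) (Z b x)" if "0 < ereal x" for x
      using that contf by (simp add: zero_ereal_def)
    show "isCont (phi b) x" for x using phi_isCont[OF b] .
    show "0 \<le> \<beta> (xm + Z b x) * w b (Z b x)" if "0 < ereal x" for x
      using that Z_pos[OF b, of x] w_pos[OF b, of "Z b x"] beta_nonneg[of "xm + Z b x"]
      by (simp add: zero_ereal_def)
    show "0 \<le> phi b x" for x using phi_pos[of b x] b by simp
    show "((ereal \<circ> Z b \<circ> real_of_ereal) \<longlongrightarrow> 0) (at_right 0)"
      using Z_lim0[OF b] by (simp add: zero_ereal_def ereal_tendsto_simps o_assoc[symmetric])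
    show "((ereal \<circ> Z b \<circ> real_of_ereal) \<longlongrightarrow> \<infinity>) (at_left \<infinity>)"
    proof -
      have "LIM x at_left \<infinity>. Z b (real_of_ereal x) :> at_top"
        unfolding at_left_PInf filterlim_filtermap using Z_lim_top[OF b] by (simp add: o_def)
      then show ?thesis
        by (subst o_assoc[symmetric], subst ereal_tendsto_simps2(2)) (simp add: o_def)
    qed
  qed
  show "set_integrable lborel (einterval 0 \<infinity>) (\<lambda>z. \<beta> (xm + z) * w b z)"
    using S(1)[OF prem int] .
  show "(LBINT z=0..\<infinity>. \<beta> (xm + z) * w b z) = (LBINT x=0..\<infinity>. \<beta> (xm + Z b x) * w b (Z b x) * phi b x)"
    using S(2)[OF prem int] .
qed

lemma translate_AE:
  assumes "AE x in lborel. P x"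
  shows "AE z in lborel. P (c + z)"
proof -
  obtain N where N: "{x \<in> space lborel. \<not> P x} \<subseteq> N" "emeasure lborel N = 0" "N \<in> sets lborel"
    using assms by (rule AE_E)
  have meas: "((+) c) \<in> measurable lborel borel" by simp
  have Nb: "N \<in> sets borel" using N(3) by simp
  have "emeasure lborel (((+) c) -` N \<inter> space lborel) = emeasure (distr lborel borel ((+) c)) N"
    using emeasure_distr[OF meas Nb] by simp
  also have "\<dots> = 0" using N(2) by (simp add: lborel_distr_plus)
  finally have "((+) c) -` N \<in> null_sets lborel"
    using measurable_sets[OF meas Nb] by (auto simp: null_sets_def)
  then have "AE z in lborel. z \<notin> ((+) c) -` N" by (rule AE_not_in)
  then show ?thesis by eventually_elim (use N(1) in auto)
qed

lemma beta_pos_shift: "\<exists>c. AE z in lborel. z \<ge> c \<longrightarrow> \<beta> (xm + z) > 0"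
proof -
  obtain x0 where x0: "AE x in lborel. x \<ge> x0 \<longrightarrow> \<beta> x > 0" using beta_pos_ae by auto
  have "AE z in lborel. xm + z \<ge> x0 \<longrightarrow> \<beta> (xm + z) > 0" using translate_AE[OF x0, of xm] .
  then have "AE z in lborel. z \<ge> x0 - xm \<longrightarrow> \<beta> (xm + z) > 0"
    by eventually_elim auto
  then show ?thesis by blast
qed

lemma pos_integral:
  assumes q: "\<And>z. z > 0 \<Longrightarrow> q z > 0"
    and int: "set_integrable lborel {0<..} (\<lambda>z. \<beta> (xm + z) * q z)"
  shows "(LINT z:{0<..}|lborel. \<beta> (xm + z) * q z) > 0"
proof -
  let ?f = "\<lambda>z. indicator {0<..} z *\<^sub>R (\<beta> (xm + z) * q z)"
  have intf: "integrable lborel ?f" using int by (simp add: set_integrable_def)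
  have nn: "0 \<le> ?f z" for z
    using q[of z] beta_nonneg[of "xm + z"] by (auto simp: indicator_def)
  have ge: "0 \<le> integral\<^sup>L lborel ?f" using nn by simp
  obtain c where c: "AE z in lborel. z \<ge> c \<longrightarrow> \<beta> (xm + z) > 0" using beta_pos_shift by auto
  define d where "d = max c 1"
  have "integral\<^sup>L lborel ?f \<noteq> 0"
  proof
    assume "integral\<^sup>L lborel ?f = 0"
    then have "AE z in lborel. ?f z = 0"
      using integral_nonneg_eq_0_iff_AE[OF intf] nn by auto
    then have "AE z in lborel. z \<notin> {d..d+1}"
      using c
    proof eventually_elim
      case (elim z)
      show ?case
      proof
        assume z: "z \<in> {d..d+1}"
        then have z1: "z > 0" "z \<ge> c" unfolding d_def by auto
        then have "\<beta> (xm + z) > 0" using elim by auto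
        moreover have "q z > 0" using q z1 by auto
        ultimately have "?f z > 0" using z1 by auto
        then show False using elim by auto
      qed
    qed
    then have "emeasure lborel {d..d+1} = 0"
      by (subst (asm) AE_iff_measurable[of "{d..d+1}"]) auto
    then show False by simp
  qed
  then show ?thesis using ge unfolding set_lebesgue_integral_def by linarith
qed

lemma F_repr:
  assumes b: "b > 0"
  shows "set_integrable lborel {0<..} (\<lambda>z. \<beta> (xm + z) * w b z)"
    "F_fun \<mu> xm g \<beta> b = (LINT z:{0<..}|lborel. \<beta> (xm + z) * w b z)"
proof -
  have e: "einterval 0 \<infinity> = {0<..}" unfolding einterval_iff set_eq_iff by (simp add: zero_ereal_def)
  show "set_integrable lborel {0<..} (\<lambda>z. \<beta> (xm + z) * w b z)" using subst_lemma(1)[OF b] e by simp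
  have "R_fun \<mu> xm g \<beta> b = (LINT a:{0..}|lborel. h b a)"
    unfolding R_fun_def h_def using Z_lebesgue[OF b] by simp
  also have "\<dots> = (LINT a:{0<..}|lborel. h b a)"
    by (rule set_integral_discrete_difference[where X="{0}"]) auto
  finally have "F_fun \<mu> xm g \<beta> b = (LINT a:{0<..}|lborel. b * h b a)"
    unfolding F_fun_def by simp
  also have "\<dots> = (LINT x:{0<..}|lborel. \<beta> (xm + Z b x) * w b (Z b x) * phi b x)"
  proof (rule set_lebesgue_integral_cong)
    show "{(0::real)<..} \<in> sets lborel" by simp
    show "\<forall>x. x \<in> {0<..} \<longrightarrow> b * h b x = \<beta> (xm + Z b x) * w b (Z b x) * phi b x"
    proof (intro allI impI)
      fix x :: real assume "x \<in> {0<..}"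
      then have x: "x > 0" by simp
      have p: "phi b x \<noteq> 0" using b phi_pos[of b x] by simp
      have "w b (Z b x) = b * exp (- \<mu> * x) / phi b x" using w_Z[OF b, of x] x by simp
      then show "b * h b x = \<beta> (xm + Z b x) * w b (Z b x) * phi b x" unfolding h_def using p by simp
    qed
  qed
  also have "\<dots> = (LBINT x=0..\<infinity>. \<beta> (xm + Z b x) * w b (Z b x) * phi b x)"
    unfolding zero_ereal_def by (rule interval_integral_to_infinity_eq[symmetric])
  also have "\<dots> = (LBINT z=0..\<infinity>. \<beta> (xm + z) * w b z)" using subst_lemma(2)[OF b] by simp
  also have "\<dots> = (LINT z:{0<..}|lborel. \<beta> (xm + z) * w b z)"
    unfolding zero_ereal_def by (rule interval_integral_to_infinity_eq)
  finally show "F_fun \<mu> xm g \<beta> b = (LINT z:{0<..}|lborel. \<beta> (xm + z) * w b z)" .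
qed

lemma w_y: "w b z = \<mu> * (exp (- \<mu> * Ainv b z) / \<mu> * b) / g (exp (- \<mu> * Ainv b z) / \<mu> * b)"
  unfolding w_def phi_def using mu_pos by simp

lemma phi_shift:
  assumes b1: "b1 > 0" and c: "exp (\<mu> * c) = b2 / b1"
  shows "phi b2 \<circ> (+) c = phi b1"
proof
  fix t
  have "exp (- \<mu> * (c + t)) * b2 = exp (- \<mu> * t) * (exp (- (\<mu> * c)) * b2)"
    by (simp add: algebra_simps exp_add[symmetric])
  also have "exp (- (\<mu> * c)) * b2 = b1" using c b1 by (simp add: exp_minus field_simps)
  finally have "exp (- \<mu> * (c + t)) * b2 = exp (- \<mu> * t) * b1" .
  then show "(phi b2 \<circ> (+) c) t = phi b1 t" unfolding phi_def o_def
    by (metis times_divide_eq_left divide_mult_eq mult.commute)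
qed

lemma y_less:
  assumes b1: "b1 > 0" and b12: "b1 < b2" and z: "z > 0"
  shows "exp (- \<mu> * Ainv b1 z) / \<mu> * b1 < exp (- \<mu> * Ainv b2 z) / \<mu> * b2"
proof (rule ccontr)
  assume "\<not> ?thesis"
  then have le: "exp (- \<mu> * Ainv b2 z) * b2 \<le> exp (- \<mu> * Ainv b1 z) * b1"
    using mu_pos by (simp add: field_simps)
  have b2: "b2 > 0" using b1 b12 by simp
  define A1 where "A1 = Ainv b1 z"
  define A2 where "A2 = Ainv b2 z"
  have A1: "Z b1 A1 = z" "A1 > 0" using Z_Ainv[OF b1 z] unfolding A1_def by auto
  have A2: "Z b2 A2 = z" "A2 > 0" using Z_Ainv[OF b2 z] unfolding A2_def by auto
  define c where "c = ln (b2 / b1) / \<mu>"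
  have ec: "exp (\<mu> * c) = b2 / b1" unfolding c_def using mu_pos b1 b2 by simp
  have cpos: "c > 0" unfolding c_def using mu_pos b1 b12 by (simp add: field_simps)
  have "exp (\<mu> * c - \<mu> * A2) = exp (- \<mu> * A2) * (b2 / b1)"
    using ec by (simp add: exp_diff exp_minus field_simps)
  also have "\<dots> \<le> exp (- \<mu> * A1)" using le b1 unfolding A1_def A2_def by (simp add: field_simps)
  finally have "\<mu> * c - \<mu> * A2 \<le> - \<mu> * A1" by simp
  then have "\<mu> * (A1 + c) \<le> \<mu> * A2" by (simp add: algebra_simps)
  then have cA: "A1 + c \<le> A2" using mu_pos by simp
  have "Z b2 A2 = Z b2 c + integral {c..A2} (phi b2)"
    using Z_diff[OF b2, of c A2] cpos cA A1 by simp
  also have "integral {c..A2} (phi b2) = integral {0..A2 - c} (phi b2 \<circ> (+) c)"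
    using integral_shift_Icc_real[of 0 "A2 - c" "phi b2" c] by simp
  also have "\<dots> = Z b1 (A2 - c)" unfolding Z_def phi_shift[OF b1 ec] ..
  finally have eq: "z = Z b2 c + Z b1 (A2 - c)" using A2 by simp
  have "Z b1 A1 \<le> Z b1 (A2 - c)"
    using Z_strict[OF b1, of A1 "A2 - c"] A1 cA by (cases "A1 = A2 - c") auto
  moreover have "Z b2 c > 0" using Z_pos[OF b2 cpos] .
  ultimately show False using eq A1 by simp
qed

lemma w_less:
  assumes b1: "b1 > 0" and b12: "b1 < b2" and z: "z > 0"
  shows "w b1 z < w b2 z"
proof -
  define y1 where "y1 = exp (- \<mu> * Ainv b1 z) / \<mu> * b1"
  define y2 where "y2 = exp (- \<mu> * Ainv b2 z) / \<mu> * b2"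
  have y12: "y1 < y2" using y_less[OF b1 b12 z] unfolding y1_def y2_def .
  have y1: "y1 > 0" unfolding y1_def using b1 mu_pos by simp
  have g12: "g y2 < g y1" using g_strict_decr[of y1 y2] y1 y12 by simp
  have g2: "g y2 > 0" using g_pos[of y2] y1 y12 by simp
  have "w b1 z = \<mu> * y1 / g y1" unfolding y1_def by (rule w_y)
  also have "\<dots> < \<mu> * y1 / g y2"
    using g12 g2 y1 mu_pos by (intro divide_strict_left_mono) auto
  also have "\<dots> < \<mu> * y2 / g y2"
    using y12 g2 mu_pos by (intro divide_strict_right_mono) auto
  also have "\<mu> * y2 / g y2 = w b2 z" unfolding y2_def by (rule w_y[symmetric])
  finally show ?thesis .
qed

lemma F_zero: "F_fun \<mu> xm g \<beta> 0 = 0" by (simp add: F_fun_def)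

lemma F_strict: "strict_mono_on {0..} (F_fun \<mu> xm g \<beta>)"
proof (rule strict_mono_onI)
  fix r s :: real assume r: "r \<in> {0..}" and s: "s \<in> {0..}" and rs: "r < s"
  have s0: "s > 0" using r rs by simp
  show "F_fun \<mu> xm g \<beta> r < F_fun \<mu> xm g \<beta> s"
  proof (cases "r = 0")
    case True
    have "0 < (LINT z:{0<..}|lborel. \<beta> (xm + z) * w s z)"
      using F_repr(1)[OF s0] w_pos[OF s0] by (intro pos_integral) auto
    then show ?thesis using F_repr(2)[OF s0] True F_zero by simp
  next
    case False
    then have r0: "r > 0" using r by simp
    have int: "set_integrable lborel {0<..} (\<lambda>z. \<beta> (xm + z) * (w s z - w r z))"
      using set_integral_diff(1)[OF F_repr(1)[OF s0] F_repr(1)[OF r0]]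
      by (simp add: algebra_simps)
    have "0 < (LINT z:{0<..}|lborel. \<beta> (xm + z) * (w s z - w r z))"
      using int w_less[OF r0 rs] by (intro pos_integral) auto
    also have "(LINT z:{0<..}|lborel. \<beta> (xm + z) * (w s z - w r z)) =
       (LINT z:{0<..}|lborel. \<beta> (xm + z) * w s z) - (LINT z:{0<..}|lborel. \<beta> (xm + z) * w r z)"
      using set_integral_diff(2)[OF F_repr(1)[OF s0] F_repr(1)[OF r0]]
      by (simp add: algebra_simps)
    finally show ?thesis using F_repr(2)[OF s0] F_repr(2)[OF r0] by simp
  qed
qed

end

theorem theorem1:
  fixes \<mu> x\<^sub>m :: real and g \<beta> :: "real \<Rightarrow> real"
  assumes mu_pos: "\<mu> > 0"
    and xm_nonneg: "x\<^sub>m \<ge> 0"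
    and g_cont: "continuous_on {0..} g"
    and g_pos: "\<And>x. x \<ge> 0 \<Longrightarrow> g x > 0"
    and g_strict_decr: "\<And>x y. 0 \<le> x \<Longrightarrow> x < y \<Longrightarrow> g y < g x"
    and g_lim: "(g \<longlongrightarrow> 0) at_top"
    and beta_lip: "\<exists>L. L-lipschitz_on {x\<^sub>m..} \<beta>"
    and beta_nonneg: "\<And>x. x \<ge> x\<^sub>m \<Longrightarrow> \<beta> x \<ge> 0"
    and beta_pos_ae: "\<exists>x\<^sub>0 \<ge> x\<^sub>m. AE x in lborel. x \<ge> x\<^sub>0 \<longrightarrow> \<beta> x > 0"
  shows "strict_mono_on {0..} (F_fun \<mu> x\<^sub>m g \<beta>)"
proof -
  interpret setting \<mu> x\<^sub>m g \<beta>
    by (rule setting.intro) (fact mu_pos xm_nonneg g_cont g_pos g_strict_decr beta_lip beta_nonneg beta_pos_ae)+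
  show ?thesis by (rule F_strict)
qed

end
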